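(* Let $n \ge 0$ and let $Z = \sum_{j=1}^m P_j$ be a point cluster of degree $m$ in $\mathbb{P}^n(\mathbb{C})$. Fix row vectors $P_j \in \mathbb{C}^{n+1}$ representing the points of $Z$ with $\|P_j\|^2 = \bar{P}_j P_j^\top = 1$. Then there is a constant $c > 0$ such that for every positive definite Hermitian $(n+1)\times(n+1)$ matrix $Q$ with eigenvalues $0 < \lambda_0 \le \lambda_1 \le \dots \le \lambda_n$ we have \[ \prod_{j=1}^m \bigl(\bar{P}_j Q P_j^\top\bigr) \ge c \prod_{k=0}^n \lambda_k^{\varphi_Z(k) - \varphi_Z(k-1)}. \]
   Context: A point cluster (positive zero-cycle) of degree $m$ in $\mathbb{P}^n$ is a formal sum $Z = \sum_{j=1}^m P_j$ of (not necessarily distinct) points $P_j \in \mathbb{P}^n$. For a linear subspace $L \subseteq \mathbb{P}^n$, $Z|_L$ denotes the sum of those points of $Z$ lying in $L$ (counted with multiplicity), and $\deg$ is the number of points. For $-1 \le k \le n$, $\varphi_Z(k) = \max\{\deg Z|_L : L \subseteq \mathbb{P}^n \text{ a } k\text{-dimensional linear subspace}\}$ (the $(-1)$-dimensional subspace being empty, so $\varphi_Z(-1) = 0$). Points are written as row vectors, $\bar{P}$ denotes complex conjugation. *)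

theory Defs
  imports "Jordan_Normal_Form.Char_Poly" "HOL-Library.Complex_Order"
begin

text \<open>A k-dimensional projective linear subspace of P^n corresponds to a (k+1)-dimensional
  linear subspace of C^(n+1), i.e. the span of k+1 linearly independent vectors.\<close>

definition lin_indep_family :: "nat \<Rightarrow> nat \<Rightarrow> (nat \<Rightarrow> complex vec) \<Rightarrow> bool" where
  "lin_indep_family n k v \<longleftrightarrow>
     (\<forall>c :: nat \<Rightarrow> complex. (\<forall>i<n+1. (\<Sum>l\<le>k. c l * v l $ i) = 0) \<longrightarrow> (\<forall>l\<le>k. c l = 0))"

definition span_family :: "nat \<Rightarrow> nat \<Rightarrow> (nat \<Rightarrow> complex vec) \<Rightarrow> complex vec set" where
  "span_family n k v = {x \<in> carrier_vec (n+1). \<exists>c :: nat \<Rightarrow> complex. \<forall>i<n+1. x $ i = (\<Sum>l\<le>k. c l * v l $ i)}"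

definition proj_subspace :: "nat \<Rightarrow> nat \<Rightarrow> complex vec set \<Rightarrow> bool" where
  "proj_subspace n k L \<longleftrightarrow>
     (\<exists>v. (\<forall>l\<le>k. v l \<in> carrier_vec (n+1)) \<and> lin_indep_family n k v \<and> L = span_family n k v)"

text \<open>phi_Z(k) for the cluster Z = P_0 + ... + P_(m-1) (points counted with multiplicity
  via their indices); phi_Z(k) = 0 for k < 0.\<close>
definition phi :: "nat \<Rightarrow> nat \<Rightarrow> (nat \<Rightarrow> complex vec) \<Rightarrow> int \<Rightarrow> nat" where
  "phi n m P k = (if k < 0 then 0 else
     Max {card {j \<in> {..<m}. P j \<in> L} | L. proj_subspace n (nat k) L})"

definition hermitian_mat :: "complex mat \<Rightarrow> bool" where
  "hermitian_mat Q \<longleftrightarrow> (\<forall>i<dim_row Q. \<forall>l<dim_col Q. Q $$ (i,l) = cnj (Q $$ (l,i)))"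

definition herm_form :: "nat \<Rightarrow> complex mat \<Rightarrow> complex vec \<Rightarrow> complex" where
  "herm_form n Q x = (\<Sum>i<n+1. \<Sum>l<n+1. cnj (x $ i) * Q $$ (i,l) * x $ l)"

definition pos_def_mat :: "nat \<Rightarrow> complex mat \<Rightarrow> bool" where
  "pos_def_mat n Q \<longleftrightarrow> (\<forall>x \<in> carrier_vec (n+1). x \<noteq> 0\<^sub>v (n+1) \<longrightarrow> herm_form n Q x > 0)"

end

theory Submission
  imports Defs "Jordan_Normal_Form.Schur_Decomposition" "HOL-Analysis.Topology_Euclidean_Space"
begin

definition ip :: "nat \<Rightarrow> (nat \<Rightarrow> complex) \<Rightarrow> (nat \<Rightarrow> complex) \<Rightarrow> complex" where
  "ip N x y = (\<Sum>i<N. cnj (x i) * y i)"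

definition spn :: "nat \<Rightarrow> (nat \<Rightarrow> nat \<Rightarrow> complex) \<Rightarrow> nat \<Rightarrow> (nat \<Rightarrow> complex) set" where
  "spn N v K = {x. \<exists>c. \<forall>i<N. x i = (\<Sum>s<K. c s * v s i)}"

definition orthn :: "nat \<Rightarrow> (nat \<Rightarrow> nat \<Rightarrow> complex) \<Rightarrow> nat \<Rightarrow> bool" where
  "orthn N v K = (\<forall>a<K. \<forall>b<K. ip N (v a) (v b) = (if a = b then 1 else 0))"

lemma spn_add: "x \<in> spn N v K \<Longrightarrow> y \<in> spn N v K \<Longrightarrow> (\<lambda>i. x i + y i) \<in> spn N v K"
proof -
  assume "x \<in> spn N v K" "y \<in> spn N v K"
  then obtain c d where "\<forall>i<N. x i = (\<Sum>s<K. c s * v s i)" "\<forall>i<N. y i = (\<Sum>s<K. d s * v s i)"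
    unfolding spn_def by auto
  note cd = this
  have "\<forall>i<N. x i + y i = (\<Sum>s<K. (c s + d s) * v s i)"
  proof (intro allI impI)
    fix i assume i: "i < N"
    have "x i + y i = (\<Sum>s<K. c s * v s i) + (\<Sum>s<K. d s * v s i)" using cd i by metis
    also have "\<dots> = (\<Sum>s<K. (c s + d s) * v s i)" by (simp add: sum.distrib distrib_right)
    finally show "x i + y i = (\<Sum>s<K. (c s + d s) * v s i)" .
  qed
  then show ?thesis unfolding spn_def mem_Collect_eq by (rule exI[of _ "\<lambda>s. c s + d s"])
qed

lemma spn_scale: "x \<in> spn N v K \<Longrightarrow> (\<lambda>i. a * x i) \<in> spn N v K"
proof -
  assume "x \<in> spn N v K"
  then obtain c where "\<forall>i<N. x i = (\<Sum>s<K. c s * v s i)"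
    unfolding spn_def by auto
  note cd = this
  have "\<forall>i<N. a * x i = (\<Sum>s<K. (a * c s) * v s i)"
  proof (intro allI impI)
    fix i assume i: "i < N"
    have "a * x i = a * (\<Sum>s<K. c s * v s i)" using cd i by metis
    also have "\<dots> = (\<Sum>s<K. (a * c s) * v s i)" by (simp add: sum_distrib_left mult.assoc)
    finally show "a * x i = (\<Sum>s<K. (a * c s) * v s i)" .
  qed
  then show ?thesis unfolding spn_def mem_Collect_eq by (rule exI[of _ "\<lambda>s. a * c s"])
qed

lemma spn_zero: "(\<lambda>i. 0) \<in> spn N v K"
  unfolding spn_def by (rule CollectI, rule exI[of _ "\<lambda>_. 0"], simp)

lemma spn_cong: "y \<in> spn N v K \<Longrightarrow> (\<forall>i<N. x i = y i) \<Longrightarrow> x \<in> spn N v K"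
  unfolding spn_def by auto

lemma spn_sum: "finite S \<Longrightarrow> (\<forall>t\<in>S. f t \<in> spn N v K) \<Longrightarrow> (\<lambda>i. \<Sum>t\<in>S. f t i) \<in> spn N v K"
proof (induction S rule: finite_induct)
  case empty
  then show ?case using spn_zero by simp
next
  case (insert a S)
  then have "(\<lambda>i. f a i + (\<Sum>t\<in>S. f t i)) \<in> spn N v K"
    using spn_add[of "f a" N v K "\<lambda>i. \<Sum>t\<in>S. f t i"] by auto
  then show ?case using insert by simp
qed

lemma spn_gen: "s < K \<Longrightarrow> v s \<in> spn N v K"
proof -
  assume s: "s < K"
  have "\<forall>i<N. v s i = (\<Sum>t<K. (if t = s then 1 else 0) * v t i)"
  proof (intro allI impI)
    fix i
    have "(\<Sum>t<K. (if t = s then 1 else 0) * v t i) = (\<Sum>t<K. (if t = s then v s i else 0))"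
      by (rule sum.cong) auto
    also have "\<dots> = v s i" using s by simp
    finally show "v s i = (\<Sum>t<K. (if t = s then 1 else 0) * v t i)" by simp
  qed
  then show ?thesis unfolding spn_def by (intro CollectI exI[of _ "\<lambda>t. if t = s then 1 else 0"])
qed

lemma spn_sub: "(\<forall>s<K. v s \<in> spn N w K') \<Longrightarrow> spn N v K \<subseteq> spn N w K'"
proof
  fix x assume h: "\<forall>s<K. v s \<in> spn N w K'" and x: "x \<in> spn N v K"
  then obtain c where c: "\<forall>i<N. x i = (\<Sum>s<K. c s * v s i)" unfolding spn_def by auto
  have "(\<lambda>i. \<Sum>s<K. c s * v s i) \<in> spn N w K'"
    by (rule spn_sum, simp, intro ballI spn_scale, use h in auto)
  then show "x \<in> spn N w K'" using c by (rule spn_cong)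
qed

lemma spn_mono: "K \<le> K' \<Longrightarrow> spn N v K \<subseteq> spn N v K'"
  by (rule spn_sub, auto intro: spn_gen)

lemma spn_eqv: assumes h: "(\<forall>s<K. \<forall>i<N. v s i = w s i)" shows "spn N v K = spn N w K"
proof -
  have "\<And>c i. i < N \<Longrightarrow> (\<Sum>s<K. c s * v s i) = (\<Sum>s<K. c s * w s i)"
    using h by (intro sum.cong) auto
  then show ?thesis unfolding spn_def by auto
qed

lemma ip_sum_right: "ip N x (\<lambda>i. \<Sum>s<K. c s * v s i) = (\<Sum>s<K. c s * ip N x (v s))"
proof -
  have "ip N x (\<lambda>i. \<Sum>s<K. c s * v s i) = (\<Sum>i<N. \<Sum>s<K. c s * (cnj (x i) * v s i))"
    unfolding ip_def by (simp add: sum_distrib_left mult_ac)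
  also have "\<dots> = (\<Sum>s<K. \<Sum>i<N. c s * (cnj (x i) * v s i))"
    by (rule sum.swap)
  also have "\<dots> = (\<Sum>s<K. c s * ip N x (v s))"
    unfolding ip_def by (simp add: sum_distrib_left)
  finally show ?thesis .
qed

lemma ip_cong_right: "(\<forall>i<N. y i = z i) \<Longrightarrow> ip N x y = ip N x z"
  unfolding ip_def by auto

lemma ip_cnj: "ip N y x = cnj (ip N x y)"
  unfolding ip_def by (simp add: mult.commute)

lemma orth_coef: assumes o: "orthn N u K'" and K: "K \<le> K'" and s: "s < K'"
  and x: "\<forall>i<N. x i = (\<Sum>t<K. c t * u t i)"
  shows "ip N (u s) x = (if s < K then c s else 0)"
proof -
  have "ip N (u s) x = (\<Sum>t<K. c t * ip N (u s) (u t))"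
    using ip_cong_right[OF x] ip_sum_right by metis
  also have "\<dots> = (\<Sum>t<K. c t * (if s = t then 1 else 0))"
    using o s K unfolding orthn_def by (intro sum.cong) auto
  also have "\<dots> = (\<Sum>t<K. if t = s then c t else 0)"
    by (rule sum.cong) auto
  also have "\<dots> = (if s < K then c s else 0)"
    using sum.delta[of "{..<K}" s c] by simp
  finally show ?thesis .
qed

lemma orth_perp: assumes "orthn N u K'" "K \<le> s" "s < K'" "x \<in> spn N u K" shows "ip N (u s) x = 0"
proof -
  obtain c where c: "\<forall>i<N. x i = (\<Sum>t<K. c t * u t i)" using assms(4) unfolding spn_def by auto
  show ?thesis using orth_coef[OF assms(1) _ assms(3) c] assms(2,3) by auto
qed

lemma orth_expand: assumes o: "orthn N u K'" and K: "K \<le> K'" and x: "x \<in> spn N u K"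
  shows "\<forall>i<N. x i = (\<Sum>t<K. ip N (u t) x * u t i)"
proof -
  obtain c where c: "\<forall>i<N. x i = (\<Sum>t<K. c t * u t i)" using x unfolding spn_def by auto
  have ct: "\<forall>t<K. ip N (u t) x = c t" using orth_coef[OF o K _ c] K by auto
  show ?thesis
  proof (intro allI impI)
    fix i assume i: "i < N"
    have "(\<Sum>t<K. ip N (u t) x * u t i) = (\<Sum>t<K. c t * u t i)"
      using ct by (intro sum.cong) auto
    then show "x i = (\<Sum>t<K. ip N (u t) x * u t i)" using c i by metis
  qed
qed

lemma ip_add_right: "ip N x (\<lambda>i. y i + z i) = ip N x y + ip N x z"
  unfolding ip_def by (simp add: distrib_left sum.distrib)
lemma ip_diff_right: "ip N x (\<lambda>i. y i - z i) = ip N x y - ip N x z"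
  unfolding ip_def by (simp add: right_diff_distrib sum_subtractf)
lemma ip_scale_right: "ip N x (\<lambda>i. a * y i) = a * ip N x y"
  unfolding ip_def by (simp add: sum_distrib_left mult_ac)
lemma ip_scale_left: "ip N (\<lambda>i. a * x i) y = cnj a * ip N x y"
  unfolding ip_def by (simp add: sum_distrib_left mult_ac)
lemma ip_self: "ip N x x = complex_of_real (\<Sum>i<N. (cmod (x i))^2)"
  unfolding ip_def of_real_sum by (rule sum.cong, simp, metis complex_norm_square mult.commute)

lemma gs_exists:
  fixes p :: "nat \<Rightarrow> nat \<Rightarrow> complex"
  assumes indep: "\<forall>c. (\<forall>i<N. (\<Sum>s<N. c s * p s i) = 0) \<longrightarrow> (\<forall>s<N. c s = 0)"
  shows "k \<le> N \<Longrightarrow> \<exists>u. orthn N u k \<and> (\<forall>j<k. p j \<in> spn N u (Suc j) \<and> u j \<in> spn N p (Suc j) \<and> ip N (u j) (p j) \<noteq> 0)"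
proof (induction k)
  case 0
  show ?case unfolding orthn_def by simp
next
  case (Suc k)
  then have kN: "k < N" by simp
  then obtain u where o: "orthn N u k" and
    props: "\<forall>j<k. p j \<in> spn N u (Suc j) \<and> u j \<in> spn N p (Suc j) \<and> ip N (u j) (p j) \<noteq> 0"
    using Suc by auto
  define w where "w = (\<lambda>i. \<Sum>s<k. ip N (u s) (p k) * u s i)"
  define r where "r = (\<lambda>i. p k i - w i)"
  have w_spn: "w \<in> spn N u k" unfolding w_def spn_def mem_Collect_eq
    by (rule exI[of _ "\<lambda>s. ip N (u s) (p k)"]) simp
  have upk: "spn N u k \<subseteq> spn N p k"
  proof (rule spn_sub, intro allI impI)
    fix s assume "s < k"
    then show "u s \<in> spn N p k" using props spn_mono[of "Suc s" k N p] by auto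
  qed
  have r_perp: "\<forall>a<k. ip N (u a) r = 0"
  proof (intro allI impI)
    fix a assume a: "a < k"
    have "ip N (u a) w = ip N (u a) (p k)"
      using orth_coef[OF o order.refl a, of w "\<lambda>s. ip N (u s) (p k)"] a unfolding w_def by simp
    then show "ip N (u a) r = 0" unfolding r_def ip_diff_right by simp
  qed
  define nr where "nr = sqrt (\<Sum>i<N. (cmod (r i))^2)"
  have r_nz: "\<exists>i<N. r i \<noteq> 0"
  proof (rule ccontr)
    assume "\<not> (\<exists>i<N. r i \<noteq> 0)"
    then have "\<forall>i<N. p k i = w i" unfolding r_def by auto
    then have "p k \<in> spn N u k" using w_spn spn_cong by blast
    then have "p k \<in> spn N p k" using upk by blast
    then obtain c where c: "\<forall>i<N. p k i = (\<Sum>s<k. c s * p s i)" unfolding spn_def by auto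
    define c' where "c' = (\<lambda>s. if s < k then c s else if s = k then -1 else (0::complex))"
    have "\<forall>i<N. (\<Sum>s<N. c' s * p s i) = 0"
    proof (intro allI impI)
      fix i assume i: "i < N"
      have "(\<Sum>s<N. c' s * p s i) = (\<Sum>s<Suc k. c' s * p s i)"
        using kN by (intro sum.mono_neutral_right) (auto simp: c'_def)
      also have "\<dots> = (\<Sum>s<k. c s * p s i) - p k i"
        by (simp add: c'_def)
      also have "\<dots> = 0" using c i by simp
      finally show "(\<Sum>s<N. c' s * p s i) = 0" .
    qed
    then have "c' k = 0" using indep kN by blast
    then show False unfolding c'_def by simp
  qed
  then obtain i0 where i0: "i0 < N" "r i0 \<noteq> 0" by auto
  have sq_pos: "(\<Sum>i<N. (cmod (r i))^2) > 0"
    by (rule sum_pos2[of _ i0]) (use i0 in auto)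
  then have nr_pos: "nr > 0" unfolding nr_def by simp
  have ip_rr: "ip N r r = complex_of_real (nr^2)"
    unfolding ip_self nr_def using sq_pos by simp
  define \<rho> where "\<rho> = complex_of_real nr"
  have rho_nz: "\<rho> \<noteq> 0" using nr_pos unfolding \<rho>_def by simp
  define v where "v = (\<lambda>i. inverse \<rho> * r i)"
  define u' where "u' = u(k := v)"
  have ip_vr: "ip N v r = \<rho>"
    unfolding v_def ip_scale_left ip_rr \<rho>_def using nr_pos
    by (simp add: power2_eq_square field_simps)
  have ip_vv: "ip N v v = 1"
  proof -
    have "ip N v v = inverse \<rho> * ip N v r" unfolding v_def[of] ip_scale_right
      by (simp add: v_def)
    then show ?thesis using ip_vr rho_nz by simp
  qed
  have ip_uv: "\<forall>a<k. ip N (u a) v = 0"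
    using r_perp unfolding v_def ip_scale_right by simp
  have o': "orthn N u' (Suc k)"
    unfolding orthn_def
  proof (intro allI impI)
    fix a b assume a: "a < Suc k" and b: "b < Suc k"
    show "ip N (u' a) (u' b) = (if a = b then 1 else 0)"
    proof (cases "a < k")
      case True
      show ?thesis
      proof (cases "b < k")
        case True
        then show ?thesis using \<open>a < k\<close> o unfolding orthn_def u'_def by auto
      next
        case False
        then have "b = k" using b by simp
        then show ?thesis using \<open>a < k\<close> ip_uv unfolding u'_def by auto
      qed
    next
      case False
      then have ak: "a = k" using a by simp
      show ?thesis
      proof (cases "b < k")
        case True
        then have "ip N (u' a) (u' b) = cnj (ip N (u b) v)" using ak
          unfolding u'_def by (simp add: ip_cnj[of N "v"])
        then show ?thesis using True ip_uv ak by simp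
      next
        case False
        then have "b = k" using b by simp
        then show ?thesis using ak ip_vv unfolding u'_def by simp
      qed
    qed
  qed
  have spn_eq: "\<And>j. j \<le> k \<Longrightarrow> spn N u' j = spn N u j"
    by (rule spn_eqv) (auto simp: u'_def)
  have w_spn': "w \<in> spn N u' k" using w_spn spn_eq by simp
  have v_spn': "v \<in> spn N u' (Suc k)" using spn_gen[of k "Suc k" u' N] unfolding u'_def by simp
  have pk1: "p k \<in> spn N u' (Suc k)"
  proof -
    have a: "w \<in> spn N u' (Suc k)" using w_spn' spn_mono[of k "Suc k" N u'] by auto
    have b: "(\<lambda>i. \<rho> * v i) \<in> spn N u' (Suc k)" using spn_scale[OF v_spn'] .
    have "\<forall>i<N. p k i = w i + \<rho> * v i" unfolding v_def r_def using rho_nz by (simp add: field_simps)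
    then show ?thesis using spn_add[OF a b] spn_cong by blast
  qed
  have pk2: "v \<in> spn N p (Suc k)"
  proof -
    have a: "p k \<in> spn N p (Suc k)" by (rule spn_gen) simp
    have b: "w \<in> spn N p (Suc k)" using w_spn upk spn_mono[of k "Suc k" N p] by auto
    have c: "(\<lambda>i. p k i + (-1) * w i) \<in> spn N p (Suc k)" using spn_add[OF a spn_scale[OF b]] .
    have "(\<lambda>i. inverse \<rho> * (p k i + (-1) * w i)) \<in> spn N p (Suc k)" using spn_scale[OF c] .
    moreover have "\<forall>i<N. v i = inverse \<rho> * (p k i + (-1) * w i)" unfolding v_def r_def by simp
    ultimately show ?thesis using spn_cong by blast
  qed
  have pk3: "ip N v (p k) \<noteq> 0"
  proof -
    have "ip N (u' k) w = 0" using orth_perp[OF o' order.refl _ w_spn'] by simp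
    then have "ip N v w = 0" unfolding u'_def by simp
    moreover have "ip N v (p k) = ip N v (\<lambda>i. w i + r i)"
      by (rule ip_cong_right) (simp add: r_def)
    ultimately have "ip N v (p k) = \<rho>" using ip_vr ip_add_right by simp
    then show ?thesis using rho_nz by simp
  qed
  have "\<forall>j<Suc k. p j \<in> spn N u' (Suc j) \<and> u' j \<in> spn N p (Suc j) \<and> ip N (u' j) (p j) \<noteq> 0"
  proof (intro allI impI)
    fix j assume j: "j < Suc k"
    show "p j \<in> spn N u' (Suc j) \<and> u' j \<in> spn N p (Suc j) \<and> ip N (u' j) (p j) \<noteq> 0"
    proof (cases "j < k")
      case True
      then show ?thesis using props spn_eq[of "Suc j"] unfolding u'_def by auto
    next
      case False
      then have "j = k" using j by simp
      then show ?thesis using pk1 pk2 pk3 unfolding u'_def by simp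
    qed
  qed
  then show ?case using o' by blast
qed

lemma mat_mult_entry: "A \<in> carrier_mat N N \<Longrightarrow> B \<in> carrier_mat N N \<Longrightarrow> i < N \<Longrightarrow> j < N \<Longrightarrow>
  (A * B) $$ (i,j) = (\<Sum>l<N. A $$ (i,l) * B $$ (l,j))"
  by (simp add: scalar_prod_def atLeast0LessThan)

lemma mat_vec_entry: "A \<in> carrier_mat N N \<Longrightarrow> v \<in> carrier_vec N \<Longrightarrow> i < N \<Longrightarrow>
  (A *\<^sub>v v) $ i = (\<Sum>l<N. A $$ (i,l) * v $ l)"
  by (simp add: scalar_prod_def atLeast0LessThan)

lemma prod_list_upt_lessThan: "prod_list (map f [0..<N]) = (\<Prod>k<N. f k)"
  by (induction N) (auto simp: lessThan_Suc mult.commute)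

definition mvec :: "nat \<Rightarrow> complex mat \<Rightarrow> (nat \<Rightarrow> complex) \<Rightarrow> (nat \<Rightarrow> complex)" where
  "mvec N Q x = (\<lambda>i. \<Sum>l<N. Q $$ (i,l) * x l)"

lemma mvec_lin: assumes "\<forall>l<N. x l = (\<Sum>s<K. c s * v s l)"
  shows "mvec N Q x i = (\<Sum>s<K. c s * mvec N Q (v s) i)"
proof -
  have "mvec N Q x i = (\<Sum>l<N. Q $$ (i,l) * (\<Sum>s<K. c s * v s l))"
    unfolding mvec_def using assms by (intro sum.cong) auto
  also have "\<dots> = (\<Sum>l<N. \<Sum>s<K. c s * (Q $$ (i,l) * v s l))"
    by (simp add: sum_distrib_left mult_ac)
  also have "\<dots> = (\<Sum>s<K. \<Sum>l<N. c s * (Q $$ (i,l) * v s l))"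
    by (rule sum.swap)
  also have "\<dots> = (\<Sum>s<K. c s * mvec N Q (v s) i)"
    unfolding mvec_def by (simp add: sum_distrib_left)
  finally show ?thesis .
qed

lemma mvec_spn: assumes x: "x \<in> spn N v K" and h: "\<forall>s<K. mvec N Q (v s) \<in> spn N w K'"
  shows "mvec N Q x \<in> spn N w K'"
proof -
  obtain c where c: "\<forall>l<N. x l = (\<Sum>s<K. c s * v s l)" using x unfolding spn_def by auto
  have "(\<lambda>i. \<Sum>s<K. c s * mvec N Q (v s) i) \<in> spn N w K'"
    by (rule spn_sum, simp, intro ballI spn_scale, use h in auto)
  moreover have "\<forall>i<N. mvec N Q x i = (\<Sum>s<K. c s * mvec N Q (v s) i)"
    using mvec_lin[OF c] by blast
  ultimately show ?thesis using spn_cong by blast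
qed

lemma herm_ip: assumes Q: "Q \<in> carrier_mat N N" and h: "hermitian_mat Q"
  shows "ip N x (mvec N Q y) = ip N (mvec N Q x) y"
proof -
  have hQ: "\<And>i l. i < N \<Longrightarrow> l < N \<Longrightarrow> cnj (Q $$ (l,i)) = Q $$ (i,l)"
    using h Q unfolding hermitian_mat_def by (metis carrier_matD(1) carrier_matD(2) complex_cnj_cnj)
  have "ip N x (mvec N Q y) = (\<Sum>i<N. \<Sum>l<N. cnj (x i) * Q $$ (i,l) * y l)"
    unfolding ip_def mvec_def by (simp add: sum_distrib_left mult_ac)
  also have "\<dots> = (\<Sum>l<N. \<Sum>i<N. cnj (x i) * Q $$ (i,l) * y l)"
    by (rule sum.swap)
  also have "\<dots> = (\<Sum>l<N. \<Sum>i<N. cnj (Q $$ (l,i)) * cnj (x i) * y l)"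
    using hQ by (intro sum.cong refl) (simp add: mult_ac)
  also have "\<dots> = ip N (mvec N Q x) y"
    unfolding ip_def mvec_def by (simp add: sum_distrib_left mult_ac)
  finally show ?thesis .
qed

lemma spectral:
  fixes Q :: "complex mat" and lam :: "nat \<Rightarrow> real"
  assumes Q: "Q \<in> carrier_mat N N" and herm: "hermitian_mat Q"
    and cp: "char_poly Q = (\<Prod>k<N. [:- complex_of_real (lam k), 1:])"
  shows "\<exists>u. orthn N u N \<and> (\<forall>i<N. \<forall>i'<N. (\<Sum>s<N. u s i * cnj (u s i')) = (if i = i' then 1 else 0))
     \<and> (\<forall>x. (\<Sum>i<N. \<Sum>l<N. cnj (x i) * Q $$ (i,l) * x l) = complex_of_real (\<Sum>s<N. lam s * (cmod (ip N (u s) x))^2))"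
proof -
  define es where "es = map (\<lambda>k. complex_of_real (lam k)) [0..<N]"
  have cp': "char_poly Q = (\<Prod>e\<leftarrow>es. [:- e, 1:])"
    unfolding cp es_def map_map o_def prod_list_upt_lessThan ..
  obtain B Pm Pi where sd: "schur_decomposition Q es = (B,Pm,Pi)"
    by (cases "schur_decomposition Q es") auto
  from schur_decomposition[OF Q cp' sd]
  have sw: "similar_mat_wit Q B Pm Pi" and ut: "upper_triangular B" and dg: "diag_mat B = es" by auto
  have dimQ: "dim_row Q = N" using Q by auto
  from sw have B: "B \<in> carrier_mat N N" and Pm: "Pm \<in> carrier_mat N N" and Pi: "Pi \<in> carrier_mat N N"
    and PP: "Pm * Pi = 1\<^sub>m N" and PP': "Pi * Pm = 1\<^sub>m N" and QPBP: "Q = Pm * B * Pi"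
    unfolding similar_mat_wit_def Let_def dimQ by auto
  have Bkk: "\<And>k. k < N \<Longrightarrow> B $$ (k,k) = complex_of_real (lam k)"
  proof -
    fix k assume k: "k < N"
    have "diag_mat B ! k = B $$ (k,k)" unfolding diag_mat_def using B k by auto
    then show "B $$ (k,k) = complex_of_real (lam k)" using dg k unfolding es_def by simp
  qed
  have Bup: "\<And>l k. k < l \<Longrightarrow> l < N \<Longrightarrow> B $$ (l,k) = 0"
    using ut B unfolding upper_triangular_def by auto
  define p where "p = (\<lambda>k i. Pm $$ (i,k))"
  have indep: "\<forall>c. (\<forall>i<N. (\<Sum>s<N. c s * p s i) = 0) \<longrightarrow> (\<forall>s<N. c s = 0)"
  proof (intro allI impI)
    fix c s assume h: "\<forall>i<N. (\<Sum>s<N. c s * p s i) = 0" and s: "s < N"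
    define cv where "cv = Matrix.vec N c"
    have cv: "cv \<in> carrier_vec N" unfolding cv_def by simp
    have "Pm *\<^sub>v cv = 0\<^sub>v N"
    proof (rule eq_vecI)
      fix i assume "i < dim_vec (0\<^sub>v N :: complex Matrix.vec)"
      then have i: "i < N" by simp
      have "(Pm *\<^sub>v cv) $ i = (\<Sum>l<N. Pm $$ (i,l) * cv $ l)" using mat_vec_entry[OF Pm cv i] .
      also have "\<dots> = (\<Sum>l<N. c l * p l i)" unfolding cv_def p_def by (intro sum.cong) auto
      also have "\<dots> = 0" using h i by simp
      finally show "(Pm *\<^sub>v cv) $ i = 0\<^sub>v N $ i" using i by simp
    qed (use Pm in simp)
    then have "Pi *\<^sub>v (Pm *\<^sub>v cv) = 0\<^sub>v N" using Pi by (intro eq_vecI) (auto simp: scalar_prod_def)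
    then have "cv = 0\<^sub>v N" using assoc_mult_mat_vec[OF Pi Pm cv] PP' cv by simp
    then show "c s = 0" using s unfolding cv_def by (metis index_vec index_zero_vec(1))
  qed
  obtain u where o: "orthn N u N" and
    props: "\<forall>j<N. p j \<in> spn N u (Suc j) \<and> u j \<in> spn N p (Suc j) \<and> ip N (u j) (p j) \<noteq> 0"
    using gs_exists[OF indep, of N] by auto
  have QP: "Q * Pm = Pm * B"
  proof -
    have "Q * Pm = Pm * B * Pi * Pm" using QPBP by simp
    also have "\<dots> = Pm * B * (Pi * Pm)" by (rule assoc_mult_mat[of "Pm * B" N N Pi N Pm N]) (use Pm B Pi in auto)
    also have "\<dots> = Pm * B" using PP' Pm B by simp
    finally show ?thesis .
  qed
  have mvp: "\<And>k i. k < N \<Longrightarrow> i < N \<Longrightarrow> mvec N Q (p k) i = (\<Sum>l<Suc k. B $$ (l,k) * p l i)"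
  proof -
    fix k i assume k: "k < N" and i: "i < N"
    have "mvec N Q (p k) i = (Q * Pm) $$ (i,k)"
      unfolding mvec_def p_def using mat_mult_entry[OF Q Pm i k] by simp
    also have "\<dots> = (\<Sum>l<N. Pm $$ (i,l) * B $$ (l,k))"
      unfolding QP using mat_mult_entry[OF Pm B i k] .
    also have "\<dots> = (\<Sum>l<Suc k. Pm $$ (i,l) * B $$ (l,k))"
      using k Bup by (intro sum.mono_neutral_right) auto
    also have "\<dots> = (\<Sum>l<Suc k. B $$ (l,k) * p l i)"
      unfolding p_def by (simp add: mult.commute)
    finally show "mvec N Q (p k) i = (\<Sum>l<Suc k. B $$ (l,k) * p l i)" .
  qed
  have pu: "\<And>k K. k < K \<Longrightarrow> K \<le> N \<Longrightarrow> p k \<in> spn N u K"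
    using props spn_mono by (meson Suc_leI less_le_trans subsetD)
  have up: "\<And>k K. k < K \<Longrightarrow> K \<le> N \<Longrightarrow> u k \<in> spn N p K"
    using props spn_mono by (meson Suc_leI less_le_trans subsetD)
  have mvp_spn: "\<And>k. k < N \<Longrightarrow> mvec N Q (p k) \<in> spn N p (Suc k)"
  proof -
    fix k assume k: "k < N"
    have "(\<lambda>i. \<Sum>l<Suc k. B $$ (l,k) * p l i) \<in> spn N p (Suc k)"
      unfolding spn_def mem_Collect_eq by (rule exI[of _ "\<lambda>l. B $$ (l,k)"]) simp
    then show "mvec N Q (p k) \<in> spn N p (Suc k)" using mvp[OF k] spn_cong by blast
  qed
  have mvu_spn: "\<And>k. k < N \<Longrightarrow> mvec N Q (u k) \<in> spn N u (Suc k)"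
  proof -
    fix k assume k: "k < N"
    have sub: "spn N p (Suc k) \<subseteq> spn N u (Suc k)"
      by (rule spn_sub) (use pu k in auto)
    show "mvec N Q (u k) \<in> spn N u (Suc k)"
    proof (rule mvec_spn[of _ N p "Suc k"])
      show "u k \<in> spn N p (Suc k)" using up k by simp
      show "\<forall>s<Suc k. mvec N Q (p s) \<in> spn N u (Suc k)"
      proof (intro allI impI)
        fix s assume s: "s < Suc k"
        have "mvec N Q (p s) \<in> spn N p (Suc s)" using mvp_spn s k by simp
        also have "\<dots> \<subseteq> spn N p (Suc k)" using spn_mono s by simp
        finally show "mvec N Q (p s) \<in> spn N u (Suc k)" using sub by blast
      qed
    qed
  qed
  define \<mu> where "\<mu> = (\<lambda>k. ip N (u k) (mvec N Q (u k)))"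
  have eig: "\<And>k i. k < N \<Longrightarrow> i < N \<Longrightarrow> mvec N Q (u k) i = \<mu> k * u k i"
  proof -
    fix k i assume k: "k < N" and i: "i < N"
    have "mvec N Q (u k) i = (\<Sum>t<Suc k. ip N (u t) (mvec N Q (u k)) * u t i)"
      using orth_expand[OF o _ mvu_spn[OF k]] k i by simp
    also have "\<dots> = (\<Sum>t<k. ip N (u t) (mvec N Q (u k)) * u t i) + \<mu> k * u k i"
      unfolding \<mu>_def by simp
    also have "(\<Sum>t<k. ip N (u t) (mvec N Q (u k)) * u t i) = 0"
    proof (rule sum.neutral, intro ballI)
      fix t assume t: "t \<in> {..<k}"
      have "ip N (u t) (mvec N Q (u k)) = ip N (mvec N Q (u t)) (u k)"
        using herm_ip[OF Q herm] by simp
      also have "\<dots> = cnj (ip N (u k) (mvec N Q (u t)))" by (rule ip_cnj)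
      also have "ip N (u k) (mvec N Q (u t)) = 0"
        using orth_perp[OF o _ k mvu_spn[of t]] t k by simp
      finally show "ip N (u t) (mvec N Q (u k)) * u t i = 0" by simp
    qed
    finally show "mvec N Q (u k) i = \<mu> k * u k i" by simp
  qed
  have mu_lam: "\<And>k. k < N \<Longrightarrow> \<mu> k = complex_of_real (lam k)"
  proof -
    fix k assume k: "k < N"
    define \<alpha> where "\<alpha> = (\<lambda>t. ip N (u t) (p k))"
    have pk: "\<forall>l<N. p k l = (\<Sum>t<Suc k. \<alpha> t * u t l)"
      using orth_expand[OF o _ pu[of k "Suc k"]] k unfolding \<alpha>_def by simp
    have "ip N (u k) (mvec N Q (p k)) = ip N (u k) (\<lambda>i. \<Sum>t<Suc k. \<alpha> t * (\<mu> t * u t i))"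
    proof (rule ip_cong_right, intro allI impI)
      fix i assume i: "i < N"
      have "mvec N Q (p k) i = (\<Sum>t<Suc k. \<alpha> t * mvec N Q (u t) i)" using mvec_lin[OF pk] .
      also have "\<dots> = (\<Sum>t<Suc k. \<alpha> t * (\<mu> t * u t i))"
        using eig k i by (intro sum.cong) auto
      finally show "mvec N Q (p k) i = (\<Sum>t<Suc k. \<alpha> t * (\<mu> t * u t i))" .
    qed
    also have "\<dots> = \<alpha> k * \<mu> k"
      using orth_coef[OF o _ k, of "Suc k" "\<lambda>i. \<Sum>t<Suc k. \<alpha> t * (\<mu> t * u t i)" "\<lambda>t. \<alpha> t * \<mu> t"] k
      by (simp add: mult.assoc)
    finally have e1: "ip N (u k) (mvec N Q (p k)) = \<alpha> k * \<mu> k" .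
    have "ip N (u k) (mvec N Q (p k)) = ip N (u k) (\<lambda>i. \<Sum>l<Suc k. B $$ (l,k) * p l i)"
      by (rule ip_cong_right) (use mvp k in auto)
    also have "\<dots> = (\<Sum>l<Suc k. B $$ (l,k) * ip N (u k) (p l))" by (rule ip_sum_right)
    also have "\<dots> = (\<Sum>l<k. B $$ (l,k) * ip N (u k) (p l)) + B $$ (k,k) * \<alpha> k"
      unfolding \<alpha>_def by simp
    also have "(\<Sum>l<k. B $$ (l,k) * ip N (u k) (p l)) = 0"
    proof (rule sum.neutral, intro ballI)
      fix l assume l: "l \<in> {..<k}"
      have "ip N (u k) (p l) = 0" using orth_perp[OF o _ k pu[of l "Suc l"]] l k by simp
      then show "B $$ (l,k) * ip N (u k) (p l) = 0" by simp
    qed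
    finally have e2: "ip N (u k) (mvec N Q (p k)) = B $$ (k,k) * \<alpha> k" by simp
    have "\<alpha> k \<noteq> 0" using props k unfolding \<alpha>_def by simp
    then show "\<mu> k = complex_of_real (lam k)" using e1 e2 Bkk[OF k] by simp
  qed
  have expand: "\<And>x. \<forall>i<N. x i = (\<Sum>t<N. ip N (u t) x * u t i)"
  proof -
    fix x :: "nat \<Rightarrow> complex"
    define xv where "xv = Matrix.vec N x"
    have xv: "xv \<in> carrier_vec N" unfolding xv_def by simp
    define yv where "yv = Pi *\<^sub>v xv"
    have yv: "yv \<in> carrier_vec N" unfolding yv_def using mult_mat_vec_carrier[OF Pi xv] by simp
    have "Pm *\<^sub>v yv = xv" unfolding yv_def using assoc_mult_mat_vec[OF Pm Pi xv] PP xv by simp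
    then have "\<forall>i<N. x i = (\<Sum>s<N. yv $ s * p s i)"
      using mat_vec_entry[OF Pm yv] unfolding xv_def p_def by (auto simp: mult.commute)
    then have "x \<in> spn N p N" unfolding spn_def mem_Collect_eq by (rule exI[of _ "\<lambda>s. yv $ s"])
    moreover have "spn N p N \<subseteq> spn N u N" by (rule spn_sub) (use pu in auto)
    ultimately show "\<forall>i<N. x i = (\<Sum>t<N. ip N (u t) x * u t i)" using orth_expand[OF o order.refl] by blast
  qed
  have compl: "\<forall>i<N. \<forall>i'<N. (\<Sum>s<N. u s i * cnj (u s i')) = (if i = i' then 1 else 0)"
  proof (intro allI impI)
    fix i i' assume i: "i < N" and i': "i' < N"
    define e where "e = (\<lambda>l. if l = i' then 1 else (0::complex))"
    have "\<And>t. ip N (u t) e = cnj (u t i')" unfolding ip_def e_def using i' by (simp add: if_distrib cong: if_cong)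
    then have "e i = (\<Sum>t<N. cnj (u t i') * u t i)" using expand[of e] i by simp
    then show "(\<Sum>s<N. u s i * cnj (u s i')) = (if i = i' then 1 else 0)" unfolding e_def by (simp add: mult.commute)
  qed
  have hf: "\<forall>x. (\<Sum>i<N. \<Sum>l<N. cnj (x i) * Q $$ (i,l) * x l) = complex_of_real (\<Sum>s<N. lam s * (cmod (ip N (u s) x))^2)"
  proof
    fix x :: "nat \<Rightarrow> complex"
    define c where "c = (\<lambda>t. ip N (u t) x)"
    have "(\<Sum>i<N. \<Sum>l<N. cnj (x i) * Q $$ (i,l) * x l) = ip N x (mvec N Q x)"
      unfolding ip_def mvec_def by (simp add: sum_distrib_left mult_ac)
    also have "\<dots> = ip N x (\<lambda>i. \<Sum>t<N. c t * (\<mu> t * u t i))"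
    proof (rule ip_cong_right, intro allI impI)
      fix i assume i: "i < N"
      have "mvec N Q x i = (\<Sum>t<N. c t * mvec N Q (u t) i)" unfolding c_def by (rule mvec_lin[OF expand[of x]])
      also have "\<dots> = (\<Sum>t<N. c t * (\<mu> t * u t i))" using eig i by (intro sum.cong) auto
      finally show "mvec N Q x i = (\<Sum>t<N. c t * (\<mu> t * u t i))" .
    qed
    also have "\<dots> = (\<Sum>t<N. c t * \<mu> t * ip N x (u t))"
      using ip_sum_right[where N=N and x=x and c="\<lambda>t. c t * \<mu> t" and K=N and v=u] by (simp add: mult.assoc)
    also have "\<dots> = (\<Sum>t<N. complex_of_real (lam t * (cmod (c t))^2))"
    proof (rule sum.cong, simp)
      fix t assume "t \<in> {..<N}"
      then have t: "t < N" by simp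
      have "ip N x (u t) = cnj (c t)" unfolding c_def by (rule ip_cnj)
      then have "c t * \<mu> t * ip N x (u t) = complex_of_real (lam t) * (c t * cnj (c t))"
        using mu_lam[OF t] by (simp add: mult_ac)
      also have "\<dots> = complex_of_real (lam t * (cmod (c t))^2)"
        by (simp add: complex_norm_square[symmetric])
      finally show "c t * \<mu> t * ip N x (u t) = complex_of_real (lam t * (cmod (c t))^2)" .
    qed
    also have "\<dots> = complex_of_real (\<Sum>s<N. lam s * (cmod (ip N (u s) x))^2)"
      unfolding c_def of_real_sum ..
    finally show "(\<Sum>i<N. \<Sum>l<N. cnj (x i) * Q $$ (i,l) * x l) = complex_of_real (\<Sum>s<N. lam s * (cmod (ip N (u s) x))^2)" .
  qed
  show ?thesis using o compl hf by blast
qed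

definition phiset :: "nat \<Rightarrow> nat \<Rightarrow> (nat \<Rightarrow> complex Matrix.vec) \<Rightarrow> nat \<Rightarrow> nat set" where
  "phiset n m P k = {card {j \<in> {..<m}. P j \<in> L} | L. proj_subspace n k L}"

lemma phiset_fin: "finite (phiset n m P k)"
proof -
  have "phiset n m P k \<subseteq> {..m}" unfolding phiset_def
    by (auto intro!: card_mono[of "{..<m}", simplified])
  then show ?thesis using finite_subset by blast
qed

lemma phi_nat: "phi n m P (int k) = Max (phiset n m P k)"
  unfolding phi_def phiset_def by simp

lemma phi_ge: "proj_subspace n k L \<Longrightarrow> card {j \<in> {..<m}. P j \<in> L} \<le> phi n m P (int k)"
  unfolding phi_nat by (rule Max_ge[OF phiset_fin]) (auto simp: phiset_def)

lemma std_subspace: assumes "k \<le> n"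
  shows "proj_subspace n k (span_family n k (\<lambda>l. unit_vec (n+1) l))"
  unfolding proj_subspace_def
proof (intro exI conjI)
  show "\<forall>l\<le>k. unit_vec (n+1) l \<in> carrier_vec (n+1)" by simp
  show "lin_indep_family n k (\<lambda>l. unit_vec (n+1) l)"
    unfolding lin_indep_family_def
  proof (intro allI impI)
    fix c :: "nat \<Rightarrow> complex" and l
    assume h: "\<forall>i<n+1. (\<Sum>l\<le>k. c l * unit_vec (n+1) l $ i) = 0" and l: "l \<le> k"
    have li: "l < n+1" using l assms by simp
    have "(\<Sum>l'\<le>k. c l' * unit_vec (n+1) l' $ l) = (\<Sum>l'\<le>k. if l' = l then c l else 0)"
      using li assms by (intro sum.cong) auto
    also have "\<dots> = c l" using l by simp
    finally show "c l = 0" using h li by simp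
  qed
qed simp

lemma phiset_ne: "k \<le> n \<Longrightarrow> phiset n m P k \<noteq> {}"
  using std_subspace unfolding phiset_def by blast

lemma phi_attained: "k \<le> n \<Longrightarrow> \<exists>L. proj_subspace n k L \<and> phi n m P (int k) = card {j \<in> {..<m}. P j \<in> L}"
proof -
  assume k: "k \<le> n"
  have "Max (phiset n m P k) \<in> phiset n m P k" by (rule Max_in[OF phiset_fin phiset_ne[OF k]])
  then show ?thesis unfolding phi_nat phiset_def by auto
qed

lemma phi_le_m: "k \<le> n \<Longrightarrow> phi n m P (int k) \<le> m"
proof -
  assume k: "k \<le> n"
  then obtain L where "phi n m P (int k) = card {j \<in> {..<m}. P j \<in> L}" using phi_attained by blast
  also have "\<dots> \<le> card {..<m}" by (rule card_mono) auto
  finally show ?thesis by simp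
qed

lemma phi_top: assumes "\<forall>j<m. P j \<in> carrier_vec (n+1)" shows "phi n m P (int n) = m"
proof -
  have "span_family n n (\<lambda>l. unit_vec (n+1) l) = carrier_vec (n+1)"
  proof
    show "span_family n n (\<lambda>l. unit_vec (n + 1) l) \<subseteq> carrier_vec (n + 1)"
      unfolding span_family_def by auto
    show "carrier_vec (n + 1) \<subseteq> span_family n n (\<lambda>l. unit_vec (n + 1) l)"
    proof
      fix x :: "complex Matrix.vec" assume x: "x \<in> carrier_vec (n+1)"
      have "\<forall>i<n+1. x $ i = (\<Sum>l\<le>n. x $ l * unit_vec (n+1) l $ i)"
      proof (intro allI impI)
        fix i assume i: "i < n+1"
        have "(\<Sum>l\<le>n. x $ l * unit_vec (n+1) l $ i) = (\<Sum>l\<le>n. if l = i then x $ i else 0)"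
          using i by (intro sum.cong) auto
        also have "\<dots> = x $ i" using i by simp
        finally show "x $ i = (\<Sum>l\<le>n. x $ l * unit_vec (n+1) l $ i)" by simp
      qed
      then show "x \<in> span_family n n (\<lambda>l. unit_vec (n + 1) l)"
        unfolding span_family_def mem_Collect_eq using x by (intro conjI exI[of _ "\<lambda>l. x $ l"])
    qed
  qed
  then have "proj_subspace n n (carrier_vec (n+1))" using std_subspace[of n n] by simp
  then have "card {j \<in> {..<m}. P j \<in> carrier_vec (n+1)} \<le> phi n m P (int n)" by (rule phi_ge)
  moreover have "{j \<in> {..<m}. P j \<in> carrier_vec (n+1)} = {..<m}" using assms by auto
  ultimately show ?thesis using phi_le_m[of n n m P] by simp
qed

lemma outside_span: assumes k: "k < n" and v: "\<forall>l\<le>k. v l \<in> carrier_vec (n+1)"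
  shows "\<exists>e. e \<in> carrier_vec (n+1) \<and> e \<notin> span_family n k v"
proof (rule ccontr)
  assume "\<not> ?thesis"
  then have "\<forall>i<n+1. unit_vec (n+1) i \<in> span_family n k v" by auto
  then have "\<forall>i<n+1. \<exists>c. \<forall>a<n+1. unit_vec (n+1) i $ a = (\<Sum>l\<le>k. c l * v l $ a)"
    unfolding span_family_def by auto
  then obtain c where c: "\<forall>i<n+1. \<forall>a<n+1. unit_vec (n+1) i $ a = (\<Sum>l\<le>k. c i l * v l $ a)"
    by metis
  define V where "V = Matrix.mat (n+1) (n+1) (\<lambda>(a,l). if l \<le> k then v l $ a else 0)"
  define C where "C = Matrix.mat (n+1) (n+1) (\<lambda>(l,i). if l \<le> k then c i l else 0)"
  have V: "V \<in> carrier_mat (n+1) (n+1)" and C: "C \<in> carrier_mat (n+1) (n+1)"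
    unfolding V_def C_def by auto
  have "V * C = 1\<^sub>m (n+1)"
  proof (rule eq_matI)
    fix a i assume a: "a < dim_row (1\<^sub>m (n+1) :: complex mat)" and i: "i < dim_col (1\<^sub>m (n+1) :: complex mat)"
    then have a: "a < n+1" and i: "i < n+1" by auto
    have "(V * C) $$ (a,i) = (\<Sum>l<n+1. V $$ (a,l) * C $$ (l,i))" using mat_mult_entry[OF V C a i] .
    also have "\<dots> = (\<Sum>l<n+1. if l \<le> k then c i l * v l $ a else 0)"
      unfolding V_def C_def using a i by (intro sum.cong) auto
    also have "\<dots> = (\<Sum>l\<in>{..k}. c i l * v l $ a)"
      using k by (subst sum.inter_filter[symmetric]) (auto intro!: sum.cong)
    also have "\<dots> = unit_vec (n+1) i $ a" using c a i by simp
    also have "\<dots> = 1\<^sub>m (n+1) $$ (a,i)" using a i by simp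
    finally show "(V * C) $$ (a,i) = 1\<^sub>m (n+1) $$ (a,i)" .
  qed (use V C in auto)
  then have CV: "C * V = 1\<^sub>m (n+1)" using mat_mult_left_right_inverse[OF V C] by simp
  have "(C * V) $$ (n,n) = (\<Sum>l<n+1. C $$ (n,l) * V $$ (l,n))" using mat_mult_entry[OF C V] by simp
  also have "\<dots> = 0" unfolding V_def using k by (intro sum.neutral) auto
  finally show False using CV by simp
qed

lemma phi_mono_step: assumes k: "k < n"
  shows "phi n m P (int k) \<le> phi n m P (int (Suc k))"
proof -
  obtain L where L: "proj_subspace n k L" and eq: "phi n m P (int k) = card {j \<in> {..<m}. P j \<in> L}"
    using phi_attained k by (meson less_imp_le)
  from L obtain v where v: "\<forall>l\<le>k. v l \<in> carrier_vec (n+1)" and li: "lin_indep_family n k v"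
    and Lv: "L = span_family n k v" unfolding proj_subspace_def by auto
  obtain e where e: "e \<in> carrier_vec (n+1)" and en: "e \<notin> span_family n k v"
    using outside_span[OF k v] by auto
  define v' where "v' = v(Suc k := e)"
  have v': "\<forall>l\<le>Suc k. v' l \<in> carrier_vec (n+1)" using v e unfolding v'_def by (auto simp: le_Suc_eq)
  have li': "lin_indep_family n (Suc k) v'"
    unfolding lin_indep_family_def
  proof (intro allI impI)
    fix c :: "nat \<Rightarrow> complex" and l
    assume h: "\<forall>i<n+1. (\<Sum>l\<le>Suc k. c l * v' l $ i) = 0" and l: "l \<le> Suc k"
    have h': "\<forall>i<n+1. (\<Sum>l\<le>k. c l * v l $ i) + c (Suc k) * e $ i = 0"
      using h unfolding v'_def by (simp add: atMost_Suc add.commute)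
    have cS: "c (Suc k) = 0"
    proof (rule ccontr)
      assume cn: "c (Suc k) \<noteq> 0"
      have "\<forall>i<n+1. e $ i = (\<Sum>l\<le>k. (- c l / c (Suc k)) * v l $ i)"
      proof (intro allI impI)
        fix i assume i: "i < n+1"
        have "c (Suc k) * e $ i = - (\<Sum>l\<le>k. c l * v l $ i)" using h' i by (simp add: eq_neg_iff_add_eq_0 add.commute)
        then have "e $ i = - (\<Sum>l\<le>k. c l * v l $ i) / c (Suc k)" using cn by (simp add: field_simps)
        also have "\<dots> = (\<Sum>l\<le>k. (- c l / c (Suc k)) * v l $ i)"
          by (simp add: sum_divide_distrib sum_negf)
        finally show "e $ i = (\<Sum>l\<le>k. (- c l / c (Suc k)) * v l $ i)" .
      qed
      then have "e \<in> span_family n k v" unfolding span_family_def mem_Collect_eq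
        using e by (intro conjI exI[of _ "\<lambda>l. - c l / c (Suc k)"])
      then show False using en by simp
    qed
    then have "\<forall>i<n+1. (\<Sum>l\<le>k. c l * v l $ i) = 0" using h' by simp
    then have "\<forall>l\<le>k. c l = 0" using li unfolding lin_indep_family_def by blast
    then show "c l = 0" using cS l by (cases "l = Suc k") auto
  qed
  have sub: "span_family n k v \<subseteq> span_family n (Suc k) v'"
  proof
    fix x assume "x \<in> span_family n k v"
    then obtain c where x: "x \<in> carrier_vec (n+1)" and c: "\<forall>i<n+1. x $ i = (\<Sum>l\<le>k. c l * v l $ i)"
      unfolding span_family_def by auto
    have "\<forall>i<n+1. x $ i = (\<Sum>l\<le>Suc k. (c(Suc k := 0)) l * v' l $ i)"
    proof (intro allI impI)
      fix i assume i: "i < n+1"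
      have "(\<Sum>l\<le>Suc k. (c(Suc k := 0)) l * v' l $ i) = (\<Sum>l\<le>k. c l * v l $ i)"
        unfolding v'_def by (simp add: atMost_Suc)
      then show "x $ i = (\<Sum>l\<le>Suc k. (c(Suc k := 0)) l * v' l $ i)" using c i by simp
    qed
    then show "x \<in> span_family n (Suc k) v'" unfolding span_family_def mem_Collect_eq
      using x by (intro conjI exI[of _ "c(Suc k := 0)"])
  qed
  have "proj_subspace n (Suc k) (span_family n (Suc k) v')"
    unfolding proj_subspace_def using v' li' by blast
  then have "card {j \<in> {..<m}. P j \<in> span_family n (Suc k) v'} \<le> phi n m P (int (Suc k))" by (rule phi_ge)
  moreover have "card {j \<in> {..<m}. P j \<in> L} \<le> card {j \<in> {..<m}. P j \<in> span_family n (Suc k) v'}"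
    using sub Lv by (intro card_mono) auto
  ultimately show ?thesis using eq by simp
qed

lemma major_aux:
  fixes lam :: "nat \<Rightarrow> real" and a b :: "nat \<Rightarrow> nat"
  assumes pos: "\<forall>k<NN. 0 < lam k" and mono: "\<forall>k<NN. \<forall>l<NN. k \<le> l \<longrightarrow> lam k \<le> lam l"
  shows "N \<le> NN \<Longrightarrow> (\<forall>K\<le>N. (\<Sum>k<K. a k) \<le> (\<Sum>k<K. b k)) \<Longrightarrow> (\<forall>k<N. lam k \<le> y) \<Longrightarrow> 0 < y \<Longrightarrow>
    (\<Prod>k<N. lam k ^ b k) \<le> (\<Prod>k<N. lam k ^ a k) * y ^ ((\<Sum>k<N. b k) - (\<Sum>k<N. a k))"
proof (induction N arbitrary: y)
  case 0
  then show ?case by simp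
next
  case (Suc N)
  have NN: "N < NN" using Suc by simp
  have lN: "0 < lam N" using pos NN by simp
  have IH: "(\<Prod>k<N. lam k ^ b k) \<le> (\<Prod>k<N. lam k ^ a k) * lam N ^ ((\<Sum>k<N. b k) - (\<Sum>k<N. a k))"
    by (rule Suc.IH) (use Suc.prems NN mono lN in auto)
  define A where "A = (\<Sum>k<N. a k)"
  define B where "B = (\<Sum>k<N. b k)"
  have AB: "A \<le> B" using Suc.prems unfolding A_def B_def by auto
  have AB1: "A + a N \<le> B + b N" using Suc.prems(2) unfolding A_def B_def by (auto dest: spec[of _ "Suc N"])
  define D where "D = (B + b N) - (A + a N)"
  have ex: "B - A + b N = a N + D" unfolding D_def using AB AB1 by simp
  have pa: "0 \<le> (\<Prod>k<N. lam k ^ a k)" using pos NN by (intro prod_nonneg) (auto intro: zero_le_power less_imp_le)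
  have yN: "lam N \<le> y" using Suc.prems by simp
  have "(\<Prod>k<Suc N. lam k ^ b k) = (\<Prod>k<N. lam k ^ b k) * lam N ^ b N" by simp
  also have "\<dots> \<le> (\<Prod>k<N. lam k ^ a k) * lam N ^ (B - A) * lam N ^ b N"
    using IH lN unfolding A_def B_def by (intro mult_right_mono) auto
  also have "\<dots> = (\<Prod>k<N. lam k ^ a k) * lam N ^ a N * lam N ^ D"
    using ex by (simp add: power_add[symmetric] mult.assoc)
  also have "\<dots> \<le> (\<Prod>k<N. lam k ^ a k) * lam N ^ a N * y ^ D"
    using pa lN yN by (intro mult_left_mono power_mono) auto
  also have "\<dots> = (\<Prod>k<Suc N. lam k ^ a k) * y ^ ((\<Sum>k<Suc N. b k) - (\<Sum>k<Suc N. a k))"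
    unfolding D_def A_def B_def by simp
  finally show ?case .
qed

lemma majorize:
  fixes lam :: "nat \<Rightarrow> real" and a b :: "nat \<Rightarrow> nat"
  assumes pos: "\<forall>k<NN. 0 < lam k" and mono: "\<forall>k<NN. \<forall>l<NN. k \<le> l \<longrightarrow> lam k \<le> lam l"
    and part: "\<forall>K\<le>NN. (\<Sum>k<K. a k) \<le> (\<Sum>k<K. b k)"
    and tot: "(\<Sum>k<NN. a k) = (\<Sum>k<NN. b k)"
  shows "(\<Prod>k<NN. lam k ^ b k) \<le> (\<Prod>k<NN. lam k ^ a k)"
proof -
  define y where "y = (\<Sum>k<NN. lam k) + 1"
  have "\<forall>k<NN. lam k \<le> y"
  proof (intro allI impI)
    fix k assume k: "k < NN"
    have "lam k \<le> (\<Sum>k<NN. lam k)"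
      using k pos by (intro member_le_sum) auto
    then show "lam k \<le> y" unfolding y_def by simp
  qed
  moreover have "0 < y" unfolding y_def using pos by (smt (verit) sum_nonneg lessThan_iff)
  ultimately show ?thesis using major_aux[OF pos mono order.refl part, of y] tot by simp
qed

lemma joint_subseq:
  fixes f :: "nat \<Rightarrow> 'b \<Rightarrow> complex"
  assumes fin: "finite I" and bd: "\<forall>k. \<forall>x\<in>I. cmod (f k x) \<le> Bd"
  shows "\<exists>r l. strict_mono r \<and> (\<forall>x\<in>I. (\<lambda>k. f (r k) x) \<longlonglongrightarrow> l x)"
  using fin bd
proof (induction I rule: finite_induct)
  case empty
  show ?case by (rule exI[of _ id]) (auto simp: strict_mono_def)
next
  case (insert a I)
  then obtain r l where r: "strict_mono r" and l: "\<forall>x\<in>I. (\<lambda>k. f (r k) x) \<longlonglongrightarrow> l x" by auto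
  have "bounded (range (\<lambda>k. f (r k) a))"
    using insert.prems by (intro boundedI[of _ Bd]) auto
  then obtain l' r' where r': "strict_mono r'" and l': "((\<lambda>k. f (r k) a) \<circ> r') \<longlonglongrightarrow> l'"
    using bounded_imp_convergent_subsequence by blast
  show ?case
  proof (intro exI conjI)
    show "strict_mono (r \<circ> r')" using r r' by (rule strict_mono_o)
    show "\<forall>x\<in>insert a I. (\<lambda>k. f ((r \<circ> r') k) x) \<longlonglongrightarrow> (l(a := l')) x"
    proof
      fix x assume x: "x \<in> insert a I"
      show "(\<lambda>k. f ((r \<circ> r') k) x) \<longlonglongrightarrow> (l(a := l')) x"
      proof (cases "x = a")
        case True
        then show ?thesis using l' by (simp add: o_def)
      next
        case False
        then have "x \<in> I" using x by simp
        then have "((\<lambda>k. f (r k) x) \<circ> r') \<longlonglongrightarrow> l x" using l r' LIMSEQ_subseq_LIMSEQ by blast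
        then show ?thesis using False by (simp add: o_def)
      qed
    qed
  qed
qed

definition orthU :: "nat \<Rightarrow> (nat \<Rightarrow> nat \<Rightarrow> complex) \<Rightarrow> bool" where
  "orthU N U \<longleftrightarrow> (\<forall>a<N. \<forall>b<N. (\<Sum>i<N. cnj (U i a) * U i b) = (if a = b then 1 else 0)) \<and>
                 (\<forall>i<N. \<forall>i'<N. (\<Sum>s<N. U i s * cnj (U i' s)) = (if i = i' then 1 else 0))"

definition coef :: "nat \<Rightarrow> (nat \<Rightarrow> nat \<Rightarrow> complex) \<Rightarrow> (nat \<Rightarrow> complex) \<Rightarrow> nat \<Rightarrow> complex" where
  "coef N U x s = (\<Sum>i<N. cnj (U i s) * x i)"

definition tail :: "nat \<Rightarrow> (nat \<Rightarrow> nat \<Rightarrow> complex) \<Rightarrow> (nat \<Rightarrow> complex) \<Rightarrow> nat \<Rightarrow> real" where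
  "tail N U x K = (\<Sum>s\<in>{K..<N}. (cmod (coef N U x s))^2)"

lemma orthU_bound: assumes "orthU N U" "i < N" "s < N" shows "cmod (U i s) \<le> 1"
proof -
  have "(\<Sum>i<N. cnj (U i s) * U i s) = 1" using assms unfolding orthU_def by simp
  moreover have "(\<Sum>i<N. cnj (U i s) * U i s) = complex_of_real (\<Sum>i<N. (cmod (U i s))^2)"
    using ip_self[of N "\<lambda>i. U i s"] unfolding ip_def .
  ultimately have "complex_of_real (\<Sum>i<N. (cmod (U i s))^2) = 1" by simp
  then have e: "(\<Sum>i<N. (cmod (U i s))^2) = 1" by (metis of_real_eq_1_iff)
  have "(cmod (U i s))^2 \<le> (\<Sum>i<N. (cmod (U i s))^2)"
    using assms(2) by (intro member_le_sum) auto
  then have "(cmod (U i s))^2 \<le> 1^2" using e by simp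
  then show ?thesis by (rule power2_le_imp_le) simp
qed

lemma orthU_expand: assumes "orthU N U" "i < N"
  shows "x i = (\<Sum>s<N. coef N U x s * U i s)"
proof -
  have "(\<Sum>s<N. coef N U x s * U i s) = (\<Sum>s<N. \<Sum>l<N. x l * (U i s * cnj (U l s)))"
    unfolding coef_def by (simp add: sum_distrib_left mult_ac)
  also have "\<dots> = (\<Sum>l<N. \<Sum>s<N. x l * (U i s * cnj (U l s)))" by (rule sum.swap)
  also have "\<dots> = (\<Sum>l<N. x l * (if i = l then 1 else 0))"
    using assms unfolding orthU_def by (intro sum.cong refl) (simp add: sum_distrib_left[symmetric])
  also have "\<dots> = (\<Sum>l<N. if l = i then x i else 0)" by (rule sum.cong) auto
  also have "\<dots> = x i" using assms(2) by simp
  finally show ?thesis by simp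
qed


lemma coef_tendsto: assumes "\<forall>i<N. (\<lambda>k. Us k i s) \<longlonglongrightarrow> U i s"
  shows "(\<lambda>k. coef N (Us k) x s) \<longlonglongrightarrow> coef N U x s"
  unfolding coef_def using assms by (intro tendsto_sum tendsto_mult tendsto_cnj tendsto_const) auto

lemma tail_tendsto: assumes "\<forall>i<N. \<forall>s<N. (\<lambda>k. Us k i s) \<longlonglongrightarrow> U i s"
  shows "(\<lambda>k. tail N (Us k) x K) \<longlonglongrightarrow> tail N U x K"
  unfolding tail_def using assms
  by (intro tendsto_sum tendsto_power tendsto_norm coef_tendsto) auto

lemma lemmaA:
  fixes n m :: nat and P :: "nat \<Rightarrow> complex Matrix.vec" and K :: nat and T :: "nat set"
  assumes carr: "\<forall>j<m. P j \<in> carrier_vec (n+1)"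
    and K1: "1 \<le> K" and Kn: "K \<le> n" and T: "T \<subseteq> {..<m}" and big: "phi n m P (int (K-1)) < card T"
  shows "\<exists>\<delta>>0. \<forall>U. orthU (Suc n) U \<longrightarrow> (\<exists>j\<in>T. \<delta> \<le> tail (Suc n) U (\<lambda>i. P j $ i) K)"
proof (rule ccontr)
  let ?N = "Suc n"
  assume "\<not> ?thesis"
  then have h: "\<forall>\<delta>>0. \<exists>U. orthU ?N U \<and> (\<forall>j\<in>T. tail ?N U (\<lambda>i. P j $ i) K < \<delta>)"
    by (metis not_le)
  have "\<forall>k. \<exists>U. orthU ?N U \<and> (\<forall>j\<in>T. tail ?N U (\<lambda>i. P j $ i) K < inverse (real (Suc k)))"
    using h by simp
  then obtain Us where Us: "\<And>k. orthU ?N (Us k)"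
    and Ust: "\<And>k. \<forall>j\<in>T. tail ?N (Us k) (\<lambda>i. P j $ i) K < inverse (real (Suc k))"
    by metis
  define f where "f = (\<lambda>k (p::nat\<times>nat). Us k (fst p) (snd p))"
  have "\<exists>r l. strict_mono r \<and> (\<forall>x\<in>{..<?N}\<times>{..<?N}. (\<lambda>k. f (r k) x) \<longlonglongrightarrow> l x)"
    by (rule joint_subseq[where Bd=1]) (auto simp: f_def intro: orthU_bound[OF Us])
  then obtain r l where r: "strict_mono r" and l: "\<forall>x\<in>{..<?N}\<times>{..<?N}. (\<lambda>k. f (r k) x) \<longlonglongrightarrow> l x"
    by blast
  define U where "U = (\<lambda>i s. l (i,s))"
  have conv: "\<forall>i<?N. \<forall>s<?N. (\<lambda>k. Us (r k) i s) \<longlonglongrightarrow> U i s"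
    using l unfolding f_def U_def by auto
  have oU: "orthU ?N U"
    unfolding orthU_def
  proof (intro conjI allI impI)
    fix a b assume a: "a < ?N" and b: "b < ?N"
    have t: "(\<lambda>k. \<Sum>i<?N. cnj (Us (r k) i a) * Us (r k) i b) \<longlonglongrightarrow> (\<Sum>i<?N. cnj (U i a) * U i b)"
      using conv a b by (intro tendsto_sum tendsto_mult tendsto_cnj) auto
    have "(\<lambda>k. \<Sum>i<?N. cnj (Us (r k) i a) * Us (r k) i b) = (\<lambda>k. if a = b then 1 else 0)"
    proof (rule ext)
      fix k
      have "orthU ?N (Us (r k))" by (rule Us)
      then show "(\<Sum>i<?N. cnj (Us (r k) i a) * Us (r k) i b) = (if a = b then 1 else 0)" unfolding orthU_def using a b by blast
    qed
    then have "(\<lambda>k. if a = b then 1 else (0::complex)) \<longlonglongrightarrow> (\<Sum>i<?N. cnj (U i a) * U i b)" using t by simp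
    then show "(\<Sum>i<?N. cnj (U i a) * U i b) = (if a = b then 1 else 0)"
      using LIMSEQ_unique[OF _ tendsto_const] by blast
  next
    fix a b assume a: "a < ?N" and b: "b < ?N"
    have t: "(\<lambda>k. \<Sum>s<?N. Us (r k) a s * cnj (Us (r k) b s)) \<longlonglongrightarrow> (\<Sum>s<?N. U a s * cnj (U b s))"
      using conv a b by (intro tendsto_sum tendsto_mult tendsto_cnj) auto
    have "(\<lambda>k. \<Sum>s<?N. Us (r k) a s * cnj (Us (r k) b s)) = (\<lambda>k. if a = b then 1 else 0)"
    proof (rule ext)
      fix k
      have "orthU ?N (Us (r k))" by (rule Us)
      then show "(\<Sum>s<?N. Us (r k) a s * cnj (Us (r k) b s)) = (if a = b then 1 else 0)" unfolding orthU_def using a b by blast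
    qed
    then have "(\<lambda>k. if a = b then 1 else (0::complex)) \<longlonglongrightarrow> (\<Sum>s<?N. U a s * cnj (U b s))" using t by simp
    then show "(\<Sum>s<?N. U a s * cnj (U b s)) = (if a = b then 1 else 0)"
      using LIMSEQ_unique[OF _ tendsto_const] by blast
  qed
  have tail0: "\<And>j. j \<in> T \<Longrightarrow> tail ?N U (\<lambda>i. P j $ i) K = 0"
  proof -
    fix j assume j: "j \<in> T"
    have "tail ?N U (\<lambda>i. P j $ i) K \<le> 0"
    proof (rule LIMSEQ_le)
      show "(\<lambda>k. tail ?N (Us (r k)) (\<lambda>i. P j $ i) K) \<longlonglongrightarrow> tail ?N U (\<lambda>i. P j $ i) K"
        using conv by (intro tail_tendsto) auto
      show "(\<lambda>k. inverse (real (Suc k))) \<longlonglongrightarrow> 0" by (rule LIMSEQ_inverse_real_of_nat)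
      show "\<exists>N. \<forall>k\<ge>N. tail ?N (Us (r k)) (\<lambda>i. P j $ i) K \<le> inverse (real (Suc k))"
      proof (intro exI allI impI)
        fix k :: nat
        have "k \<le> r k" using r by (rule seq_suble)
        then have "inverse (real (Suc (r k))) \<le> inverse (real (Suc k))"
          by (intro le_imp_inverse_le) auto
        moreover have "tail ?N (Us (r k)) (\<lambda>i. P j $ i) K < inverse (real (Suc (r k)))"
          using Ust[of "r k"] j by blast
        ultimately show "tail ?N (Us (r k)) (\<lambda>i. P j $ i) K \<le> inverse (real (Suc k))"
          by linarith
      qed
    qed
    moreover have "0 \<le> tail ?N U (\<lambda>i. P j $ i) K" unfolding tail_def by (intro sum_nonneg) auto
    ultimately show "tail ?N U (\<lambda>i. P j $ i) K = 0" by simp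
  qed
  have coef0: "\<And>j s. j \<in> T \<Longrightarrow> K \<le> s \<Longrightarrow> s < ?N \<Longrightarrow> coef ?N U (\<lambda>i. P j $ i) s = 0"
  proof -
    fix j s assume j: "j \<in> T" and s: "K \<le> s" "s < ?N"
    have "(\<Sum>s\<in>{K..<?N}. (cmod (coef ?N U (\<lambda>i. P j $ i) s))^2) = 0"
      using tail0[OF j] unfolding tail_def .
    then have "\<forall>s\<in>{K..<?N}. (cmod (coef ?N U (\<lambda>i. P j $ i) s))^2 = 0"
      by (subst sum_nonneg_eq_0_iff[symmetric]) auto
    then show "coef ?N U (\<lambda>i. P j $ i) s = 0" using s by simp
  qed
  define w where "w = (\<lambda>l. Matrix.vec ?N (\<lambda>i. U i l))"
  have Kset: "{..K-1} = {..<K}" using K1 by auto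
  define L where "L = span_family n (K-1) w"
  have PL: "\<And>j. j \<in> T \<Longrightarrow> P j \<in> L"
  proof -
    fix j assume j: "j \<in> T"
    have "\<forall>i<n+1. P j $ i = (\<Sum>l\<le>K-1. coef ?N U (\<lambda>i. P j $ i) l * w l $ i)"
    proof (intro allI impI)
      fix i assume i: "i < n+1"
      have "P j $ i = (\<Sum>s<?N. coef ?N U (\<lambda>i. P j $ i) s * U i s)"
        using orthU_expand[OF oU, of i "\<lambda>i. P j $ i"] i by simp
      also have "\<dots> = (\<Sum>s<K. coef ?N U (\<lambda>i. P j $ i) s * U i s)"
        using Kn coef0[OF j] by (intro sum.mono_neutral_right) auto
      also have "\<dots> = (\<Sum>l\<le>K-1. coef ?N U (\<lambda>i. P j $ i) l * w l $ i)"
        unfolding Kset w_def using i by (intro sum.cong) auto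
      finally show "P j $ i = (\<Sum>l\<le>K-1. coef ?N U (\<lambda>i. P j $ i) l * w l $ i)" .
    qed
    moreover have "P j \<in> carrier_vec (n+1)" using carr T j by auto
    ultimately show "P j \<in> L" unfolding L_def span_family_def mem_Collect_eq
      by (intro conjI exI[of _ "\<lambda>l. coef ?N U (\<lambda>i. P j $ i) l"])
  qed
  have li: "lin_indep_family n (K-1) w"
    unfolding lin_indep_family_def
  proof (intro allI impI)
    fix c :: "nat \<Rightarrow> complex" and l'
    assume h0: "\<forall>i<n+1. (\<Sum>l\<le>K-1. c l * w l $ i) = 0" and l': "l' \<le> K-1"
    have h: "\<forall>i<?N. (\<Sum>l<K. c l * U i l) = 0"
      using h0 unfolding Kset w_def by (auto cong: sum.cong)
    have "0 = (\<Sum>i<?N. cnj (U i l') * (\<Sum>l<K. c l * U i l))" using h by simp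
    also have "\<dots> = (\<Sum>i<?N. \<Sum>l<K. c l * (cnj (U i l') * U i l))"
      by (simp add: sum_distrib_left mult_ac)
    also have "\<dots> = (\<Sum>l<K. \<Sum>i<?N. c l * (cnj (U i l') * U i l))" by (rule sum.swap)
    also have "\<dots> = (\<Sum>l<K. c l * (if l' = l then 1 else 0))"
      using oU Kn l' K1 unfolding orthU_def by (intro sum.cong refl) (simp add: sum_distrib_left[symmetric])
    also have "\<dots> = (\<Sum>l<K. if l = l' then c l' else 0)" by (rule sum.cong) auto
    also have "\<dots> = c l'" using l' K1 by simp
    finally show "c l' = 0" by simp
  qed
  have "proj_subspace n (K-1) L"
    unfolding proj_subspace_def L_def using li by (intro exI[of _ w]) (auto simp: w_def)
  then have "card {j \<in> {..<m}. P j \<in> L} \<le> phi n m P (int (K-1))" by (rule phi_ge)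
  moreover have "card T \<le> card {j \<in> {..<m}. P j \<in> L}" using T PL by (intro card_mono) auto
  ultimately show False using big by simp
qed

lemma keylemma:
  fixes n m :: nat and P :: "nat \<Rightarrow> complex Matrix.vec"
  assumes carr: "\<forall>j<m. P j \<in> carrier_vec (n+1)"
  shows "\<exists>\<delta>>0. \<delta> \<le> 1 \<and> (\<forall>U. orthU (Suc n) U \<longrightarrow> (\<forall>K. 1 \<le> K \<longrightarrow> K \<le> n \<longrightarrow>
     card {j\<in>{..<m}. tail (Suc n) U (\<lambda>i. P j $ i) K < \<delta>} \<le> phi n m P (int (K-1))))"
proof -
  define S where "S = {(K,T). 1 \<le> K \<and> K \<le> n \<and> T \<subseteq> {..<m} \<and> phi n m P (int (K-1)) < card T}"
  have "S \<subseteq> {..n} \<times> Pow {..<m}" unfolding S_def by auto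
  then have finS: "finite S" by (rule finite_subset) auto
  define Pr where "Pr = (\<lambda>(\<delta>::real) (p::nat \<times> nat set). \<forall>U. orthU (Suc n) U \<longrightarrow> (\<exists>j\<in>snd p. \<delta> \<le> tail (Suc n) U (\<lambda>i. P j $ i) (fst p)))"
  have ev: "\<forall>p\<in>S. eventually (\<lambda>\<delta>. Pr \<delta> p) (at_right (0::real))"
  proof
    fix p assume p: "p \<in> S"
    obtain K T where pKT: "p = (K,T)" by (cases p)
    have h: "1 \<le> K" "K \<le> n" "T \<subseteq> {..<m}" "phi n m P (int (K-1)) < card T" using p pKT unfolding S_def by auto
    obtain \<delta>0 where d0: "\<delta>0 > 0" and d0p: "\<forall>U. orthU (Suc n) U \<longrightarrow> (\<exists>j\<in>T. \<delta>0 \<le> tail (Suc n) U (\<lambda>i. P j $ i) K)"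
      using lemmaA[OF carr h] by blast
    show "eventually (\<lambda>\<delta>. Pr \<delta> p) (at_right (0::real))"
      unfolding eventually_at_right_field
    proof (intro exI conjI allI impI)
      show "(0::real) < \<delta>0" by (rule d0)
      fix y :: real assume y: "0 < y" "y < \<delta>0"
      show "Pr y p" unfolding Pr_def pKT fst_conv snd_conv
      proof (intro allI impI)
        fix U assume "orthU (Suc n) U"
        then obtain j where "j \<in> T" "\<delta>0 \<le> tail (Suc n) U (\<lambda>i. P j $ i) K" using d0p by blast
        then show "\<exists>j\<in>T. y \<le> tail (Suc n) U (\<lambda>i. P j $ i) K" using y by (intro bexI[of _ j]) auto
      qed
    qed
  qed
  have "eventually (\<lambda>\<delta>. \<forall>p\<in>S. Pr \<delta> p) (at_right (0::real))"
    by (rule eventually_ball_finite[OF finS ev])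
  then obtain b where b: "(0::real) < b" and bp: "\<forall>y>0. y < b \<longrightarrow> (\<forall>p\<in>S. Pr y p)"
    unfolding eventually_at_right_field by blast
  define \<delta> where "\<delta> = min (b/2) 1"
  have dpos: "\<delta> > 0" and dle: "\<delta> \<le> 1" and db: "\<delta> < b" using b unfolding \<delta>_def by auto
  have "\<forall>U. orthU (Suc n) U \<longrightarrow> (\<forall>K. 1 \<le> K \<longrightarrow> K \<le> n \<longrightarrow>
     card {j\<in>{..<m}. tail (Suc n) U (\<lambda>i. P j $ i) K < \<delta>} \<le> phi n m P (int (K-1)))"
  proof (intro allI impI)
    fix U K assume oU: "orthU (Suc n) U" and K: "1 \<le> K" "K \<le> n"
    define T where "T = {j\<in>{..<m}. tail (Suc n) U (\<lambda>i. P j $ i) K < \<delta>}"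
    show "card {j\<in>{..<m}. tail (Suc n) U (\<lambda>i. P j $ i) K < \<delta>} \<le> phi n m P (int (K-1))"
    proof (rule ccontr)
      assume "\<not> ?thesis"
      then have "(K,T) \<in> S" unfolding S_def T_def using K by auto
      then have "Pr \<delta> (K,T)" using bp dpos db by blast
      then obtain j where "j \<in> T" "\<delta> \<le> tail (Suc n) U (\<lambda>i. P j $ i) K" unfolding Pr_def using oU by auto
      then show False unfolding T_def by simp
    qed
  qed
  then show ?thesis using dpos dle by blast
qed

lemma prod_fibers:
  fixes f :: "nat \<Rightarrow> real" and g :: "nat \<Rightarrow> nat"
  shows "\<forall>j<m. g j < N \<Longrightarrow> (\<Prod>j<m. f (g j)) = (\<Prod>k<N. f k ^ card {j\<in>{..<m}. g j = k})"
proof (induction m)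
  case 0
  then show ?case by simp
next
  case (Suc m)
  have gm: "g m < N" using Suc.prems by simp
  have card: "\<And>k. card {j\<in>{..<Suc m}. g j = k} = card {j\<in>{..<m}. g j = k} + (if g m = k then 1 else 0)"
  proof -
    fix k
    show "card {j\<in>{..<Suc m}. g j = k} = card {j\<in>{..<m}. g j = k} + (if g m = k then 1 else 0)"
    proof (cases "g m = k")
      case True
      then have "{j\<in>{..<Suc m}. g j = k} = insert m {j\<in>{..<m}. g j = k}" by auto
      then show ?thesis using True by simp
    next
      case False
      then have "{j\<in>{..<Suc m}. g j = k} = {j\<in>{..<m}. g j = k}" by (auto simp: less_Suc_eq)
      then show ?thesis using False by simp
    qed
  qed
  have "(\<Prod>j<Suc m. f (g j)) = (\<Prod>k<N. f k ^ card {j\<in>{..<m}. g j = k}) * f (g m)"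
    using Suc by simp
  also have "f (g m) = (\<Prod>k<N. f k ^ (if g m = k then 1 else 0))"
  proof -
    have "(\<Prod>k<N. f k ^ (if g m = k then 1 else 0)) = (\<Prod>k<N. if k = g m then f k else 1)"
      by (rule prod.cong) auto
    also have "\<dots> = f (g m)" using gm by simp
    finally show ?thesis by simp
  qed
  also have "(\<Prod>k<N. f k ^ card {j\<in>{..<m}. g j = k}) * (\<Prod>k<N. f k ^ (if g m = k then 1 else 0)) =
     (\<Prod>k<N. f k ^ card {j\<in>{..<Suc m}. g j = k})"
    unfolding card power_add prod.distrib ..
  finally show ?case .
qed

lemma sum_fibers:
  fixes g :: "nat \<Rightarrow> nat"
  shows "(\<Sum>k<K. card {j\<in>{..<m}. g j = k}) = card {j\<in>{..<m}. g j < K}"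
proof (induction K)
  case 0
  then show ?case by simp
next
  case (Suc K)
  have "{j\<in>{..<m}. g j < Suc K} = {j\<in>{..<m}. g j < K} \<union> {j\<in>{..<m}. g j = K}" by auto
  moreover have "card ({j\<in>{..<m}. g j < K} \<union> {j\<in>{..<m}. g j = K}) =
     card {j\<in>{..<m}. g j < K} + card {j\<in>{..<m}. g j = K}"
    by (rule card_Un_disjoint) auto
  ultimately show ?case using Suc by simp
qed

lemma phi_tele: assumes "K \<le> Suc n"
  shows "(\<Sum>k<K. phi n m P (int k) - phi n m P (int k - 1)) = (if K = 0 then 0 else phi n m P (int (K-1)))"
  using assms
proof (induction K)
  case 0
  then show ?case by simp
next
  case (Suc K)
  have IH: "(\<Sum>k<K. phi n m P (int k) - phi n m P (int k - 1)) = (if K = 0 then 0 else phi n m P (int (K-1)))"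
    using Suc by simp
  show ?case
  proof (cases "K = 0")
    case True
    then show ?thesis by (simp add: phi_def)
  next
    case False
    have e: "int K - 1 = int (K-1)" using False by simp
    have mono: "phi n m P (int (K-1)) \<le> phi n m P (int (Suc (K-1)))"
      using phi_mono_step[of "K-1" n m P] Suc.prems False by simp
    have "Suc (K-1) = K" using False by simp
    then show ?thesis using IH False mono unfolding e by simp
  qed
qed

lemma lam_mono: assumes "\<forall>k<n. (lam::nat\<Rightarrow>real) k \<le> lam (Suc k)"
  shows "l \<le> n \<Longrightarrow> k \<le> l \<Longrightarrow> lam k \<le> lam l"
proof (induction l)
  case 0
  then show ?case by simp
next
  case (Suc l)
  show ?case
  proof (cases "k = Suc l")
    case True
    then show ?thesis by simp
  next
    case False
    then have "lam k \<le> lam l" using Suc by simp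
    also have "\<dots> \<le> lam (Suc l)" using assms Suc.prems by simp
    finally show ?thesis .
  qed
qed

hide_type (open) Finite_Cartesian_Product.vec

theorem mainTheorem1:
  fixes n m :: nat and P :: "nat \<Rightarrow> complex vec"
  assumes "\<forall>j<m. P j \<in> carrier_vec (n+1)"
    and "\<forall>j<m. (\<Sum>i<n+1. cnj (P j $ i) * P j $ i) = 1"
  shows "\<exists>c :: real. c > 0 \<and>
    (\<forall>(Q :: complex mat) (lam :: nat \<Rightarrow> real).
       Q \<in> carrier_mat (n+1) (n+1) \<longrightarrow> hermitian_mat Q \<longrightarrow> pos_def_mat n Q \<longrightarrow>
       char_poly Q = (\<Prod>k\<le>n. [:- complex_of_real (lam k), 1:]) \<longrightarrow>
       0 < lam 0 \<longrightarrow> (\<forall>k<n. lam k \<le> lam (Suc k)) \<longrightarrow>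
       (\<Prod>j<m. herm_form n Q (P j)) \<ge>
         complex_of_real (c * (\<Prod>k\<le>n. lam k ^ (phi n m P (int k) - phi n m P (int k - 1)))))"
proof -
  let ?N = "Suc n"
  obtain \<delta> where dpos: "\<delta> > 0" and dle: "\<delta> \<le> 1" and key: "\<forall>U. orthU ?N U \<longrightarrow> (\<forall>K. 1 \<le> K \<longrightarrow> K \<le> n \<longrightarrow>
     card {j\<in>{..<m}. tail ?N U (\<lambda>i. P j $ i) K < \<delta>} \<le> phi n m P (int (K-1)))"
    using keylemma[OF assms(1)] by blast
  define c where "c = \<delta> ^ m"
  show ?thesis
  proof (intro exI[of _ c] conjI allI impI)
    show "c > 0" using dpos unfolding c_def by simp
    fix Q :: "complex mat" and lam :: "nat \<Rightarrow> real"
    assume Q: "Q \<in> carrier_mat (n+1) (n+1)" and herm: "hermitian_mat Q" and pd: "pos_def_mat n Q"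
      and cp: "char_poly Q = (\<Prod>k\<le>n. [:- complex_of_real (lam k), 1:])" and l0: "0 < lam 0"
      and lmono: "\<forall>k<n. lam k \<le> lam (Suc k)"
    have QN: "Q \<in> carrier_mat ?N ?N" using Q by simp
    have cpN: "char_poly Q = (\<Prod>k<?N. [:- complex_of_real (lam k), 1:])" using cp by (simp add: lessThan_Suc_atMost)
    obtain u where o: "orthn ?N u ?N"
      and compl: "\<forall>i<?N. \<forall>i'<?N. (\<Sum>s<?N. u s i * cnj (u s i')) = (if i = i' then 1 else 0)"
      and hf: "\<forall>x. (\<Sum>i<?N. \<Sum>l<?N. cnj (x i) * Q $$ (i,l) * x l) = complex_of_real (\<Sum>s<?N. lam s * (cmod (ip ?N (u s) x))^2)"
      using spectral[OF QN herm cpN] by blast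
    define U where "U = (\<lambda>i s. u s i)"
    have oU: "orthU ?N U" unfolding orthU_def U_def using o compl unfolding orthn_def ip_def by auto
    have coef_ip: "\<And>x s. coef ?N U x s = ip ?N (u s) x" unfolding coef_def U_def ip_def ..
    define x where "x = (\<lambda>j i. P j $ i)"
    have lmono': "\<And>k l. l \<le> n \<Longrightarrow> k \<le> l \<Longrightarrow> lam k \<le> lam l" using lam_mono[OF lmono] by blast
    have lpos: "\<And>k. k \<le> n \<Longrightarrow> 0 < lam k" using l0 lmono' by (meson le0 less_le_trans)
    define h where "h = (\<lambda>j. \<Sum>s<?N. lam s * (cmod (coef ?N U (x j) s))^2)"
    have hf': "\<And>j. herm_form n Q (P j) = complex_of_real (h j)"
      unfolding herm_form_def h_def x_def coef_ip using hf by simp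
    have tail0: "\<And>j. j < m \<Longrightarrow> tail ?N U (x j) 0 = 1"
    proof -
      fix j assume j: "j < m"
      have one: "ip ?N (x j) (x j) = 1" using assms(2) j unfolding ip_def x_def by simp
      have expand: "\<forall>i<?N. x j i = (\<Sum>s<?N. coef ?N U (x j) s * u s i)"
        using orthU_expand[OF oU] unfolding U_def by blast
      have "ip ?N (x j) (x j) = ip ?N (x j) (\<lambda>i. \<Sum>s<?N. coef ?N U (x j) s * u s i)"
        by (rule ip_cong_right[OF expand])
      also have "\<dots> = (\<Sum>s<?N. coef ?N U (x j) s * ip ?N (x j) (u s))" by (rule ip_sum_right)
      also have "\<dots> = (\<Sum>s<?N. complex_of_real ((cmod (coef ?N U (x j) s))^2))"
      proof (rule sum.cong, simp)
        fix s
        have "ip ?N (x j) (u s) = cnj (coef ?N U (x j) s)" unfolding coef_ip by (rule ip_cnj)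
        then show "coef ?N U (x j) s * ip ?N (x j) (u s) = complex_of_real ((cmod (coef ?N U (x j) s))^2)"
          using complex_norm_square[of "coef ?N U (x j) s"] by simp
      qed
      finally have "complex_of_real (\<Sum>s<?N. (cmod (coef ?N U (x j) s))^2) = 1"
        using one by (simp add: of_real_sum)
      then have "(\<Sum>s<?N. (cmod (coef ?N U (x j) s))^2) = 1" by (metis of_real_eq_1_iff)
      then show "tail ?N U (x j) 0 = 1" unfolding tail_def by (simp add: atLeast0LessThan)
    qed
    define Sj where "Sj = (\<lambda>j. {K. K \<le> n \<and> \<delta> \<le> tail ?N U (x j) K})"
    define \<sigma> where "\<sigma> = (\<lambda>j. Max (Sj j))"
    have \<sigma>props: "\<And>j. j < m \<Longrightarrow> \<sigma> j \<le> n \<and> \<delta> \<le> tail ?N U (x j) (\<sigma> j) \<and>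
         (\<forall>K. K \<le> n \<longrightarrow> \<sigma> j < K \<longrightarrow> tail ?N U (x j) K < \<delta>)"
    proof -
      fix j assume j: "j < m"
      have fin: "finite (Sj j)" unfolding Sj_def by (rule finite_subset[of _ "{..n}"]) auto
      have ne: "0 \<in> Sj j" unfolding Sj_def using tail0[OF j] dle by simp
      have "\<sigma> j \<in> Sj j" unfolding \<sigma>_def using Max_in[OF fin] ne by blast
      moreover have "\<forall>K. K \<le> n \<longrightarrow> \<sigma> j < K \<longrightarrow> tail ?N U (x j) K < \<delta>"
      proof (intro allI impI)
        fix K assume K: "K \<le> n" "\<sigma> j < K"
        show "tail ?N U (x j) K < \<delta>"
        proof (rule ccontr)
          assume "\<not> ?thesis"
          then have "K \<in> Sj j" unfolding Sj_def using K by simp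
          then have "K \<le> \<sigma> j" unfolding \<sigma>_def using Max_ge[OF fin] by blast
          then show False using K by simp
        qed
      qed
      ultimately show "?thesis j" unfolding Sj_def by simp
    qed
    have hlow: "\<And>j. j < m \<Longrightarrow> \<delta> * lam (\<sigma> j) \<le> h j"
    proof -
      fix j assume j: "j < m"
      let ?c = "\<lambda>s. (cmod (coef ?N U (x j) s))^2"
      have sn: "\<sigma> j \<le> n" using \<sigma>props[OF j] by simp
      have "\<delta> * lam (\<sigma> j) \<le> lam (\<sigma> j) * tail ?N U (x j) (\<sigma> j)"
        using \<sigma>props[OF j] lpos[OF sn] by (simp add: mult.commute mult_left_mono)
      also have "\<dots> = (\<Sum>s\<in>{\<sigma> j..<?N}. lam (\<sigma> j) * ?c s)"
        unfolding tail_def by (rule sum_distrib_left)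
      also have "\<dots> \<le> (\<Sum>s\<in>{\<sigma> j..<?N}. lam s * ?c s)"
        using lmono' by (intro sum_mono mult_right_mono) auto
      also have "\<dots> \<le> (\<Sum>s<?N. lam s * ?c s)"
      proof (rule sum_mono2)
        show "finite {..<?N}" by simp
        show "{\<sigma> j..<?N} \<subseteq> {..<?N}" by auto
        fix s assume "s \<in> {..<?N} - {\<sigma> j..<?N}"
        then have "s \<le> n" by auto
        then show "0 \<le> lam s * ?c s" using mult_nonneg_nonneg[OF less_imp_le[OF lpos] zero_le_power2] by blast
      qed
      finally show "\<delta> * lam (\<sigma> j) \<le> h j" unfolding h_def .
    qed
    define a where "a = (\<lambda>k. card {j\<in>{..<m}. \<sigma> j = k})"
    define b where "b = (\<lambda>k. phi n m P (int k) - phi n m P (int k - 1))"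
    have \<sigma>N: "\<forall>j<m. \<sigma> j < ?N" using \<sigma>props by (simp add: less_Suc_eq_le)
    have maj: "(\<Prod>k<?N. lam k ^ b k) \<le> (\<Prod>k<?N. lam k ^ a k)"
    proof (rule majorize)
      show "\<forall>k<?N. 0 < lam k" using lpos by (simp add: less_Suc_eq_le)
      show "\<forall>k<?N. \<forall>l<?N. k \<le> l \<longrightarrow> lam k \<le> lam l" using lmono' by (simp add: less_Suc_eq_le)
      have suma: "\<And>K. (\<Sum>k<K. a k) = card {j\<in>{..<m}. \<sigma> j < K}" unfolding a_def by (rule sum_fibers)
      have sumb: "\<And>K. K \<le> ?N \<Longrightarrow> (\<Sum>k<K. b k) = (if K = 0 then 0 else phi n m P (int (K-1)))"
        unfolding b_def by (rule phi_tele)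
      have allm: "{j\<in>{..<m}. \<sigma> j < ?N} = {..<m}" using \<sigma>N by auto
      have ptop: "phi n m P (int n) = m" by (rule phi_top[OF assms(1)])
      show "\<forall>K\<le>?N. (\<Sum>k<K. a k) \<le> (\<Sum>k<K. b k)"
      proof (intro allI impI)
        fix K assume K: "K \<le> ?N"
        show "(\<Sum>k<K. a k) \<le> (\<Sum>k<K. b k)"
        proof (cases "K = 0")
          case True
          then show ?thesis by simp
        next
          case False
          show ?thesis
          proof (cases "K = ?N")
            case True
            have "card {j\<in>{..<m}. \<sigma> j < K} \<le> m" using card_mono[of "{..<m}" "{j\<in>{..<m}. \<sigma> j < K}"] by auto
            moreover have "(\<Sum>k<K. b k) = m" using sumb[OF K] True ptop by simp
            ultimately show ?thesis using suma[of K] by simp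
          next
            case False
            then have K1: "1 \<le> K" "K \<le> n" using K \<open>K \<noteq> 0\<close> by auto
            have "{j\<in>{..<m}. \<sigma> j < K} \<subseteq> {j\<in>{..<m}. tail ?N U (\<lambda>i. P j $ i) K < \<delta>}"
              using \<sigma>props K1 unfolding x_def by auto
            then have "card {j\<in>{..<m}. \<sigma> j < K} \<le> card {j\<in>{..<m}. tail ?N U (\<lambda>i. P j $ i) K < \<delta>}"
              by (intro card_mono) auto
            also have "\<dots> \<le> phi n m P (int (K-1))" using key oU K1 by blast
            finally show ?thesis using suma sumb[OF K] K1 by simp
          qed
        qed
      qed
      show "(\<Sum>k<?N. a k) = (\<Sum>k<?N. b k)" using suma[of ?N] sumb[of ?N] allm ptop by simp
    qed
    have P2: "(\<Prod>j<m. \<delta> * lam (\<sigma> j)) = c * (\<Prod>k<?N. lam k ^ a k)"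
      unfolding c_def a_def prod.distrib using prod_fibers[OF \<sigma>N, of lam] by simp
    have P1: "(\<Prod>j<m. \<delta> * lam (\<sigma> j)) \<le> (\<Prod>j<m. h j)"
    proof (rule prod_mono)
      fix j assume "j \<in> {..<m}"
      then have j: "j < m" by simp
      have "0 \<le> \<delta> * lam (\<sigma> j)" using dpos lpos \<sigma>props[OF j] by (simp add: less_imp_le)
      then show "0 \<le> \<delta> * lam (\<sigma> j) \<and> \<delta> * lam (\<sigma> j) \<le> h j" using hlow[OF j] by simp
    qed
    have cpos: "0 \<le> c" unfolding c_def using dpos by simp
    have ineq: "c * (\<Prod>k\<le>n. lam k ^ b k) \<le> (\<Prod>j<m. h j)"
    proof -
      have "c * (\<Prod>k\<le>n. lam k ^ b k) = c * (\<Prod>k<?N. lam k ^ b k)" by (simp add: lessThan_Suc_atMost)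
      also have "\<dots> \<le> c * (\<Prod>k<?N. lam k ^ a k)" using maj cpos by (rule mult_left_mono)
      also have "\<dots> \<le> (\<Prod>j<m. h j)" using P1 P2 by simp
      finally show ?thesis .
    qed
    have ofmono: "\<And>X Y :: real. X \<le> Y \<Longrightarrow> complex_of_real X \<le> complex_of_real Y"
      by (simp add: less_eq_complex_def)
    have eq: "(\<Prod>j<m. herm_form n Q (P j)) = complex_of_real (\<Prod>j<m. h j)"
      unfolding hf' of_real_prod ..
    show "complex_of_real (c * (\<Prod>k\<le>n. lam k ^ (phi n m P (int k) - phi n m P (int k - 1)))) \<le>
       (\<Prod>j<m. herm_form n Q (P j))"
      unfolding eq using ofmono[OF ineq] unfolding b_def .
  qed
qed

end
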